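(* Let $k=2r+1$ with $r\geq1$ and $G=BS(1,k)$. Let $c_0(n)$ be the number of conjugacy classes of $G$ contained in the subgroup $\mathbb{Z}[1/k]$ whose length with respect to $\{a,t\}$ is $n$. Then the growth rate $\limsup_n c_0(n)^{1/n}$ of these conjugacy classes lies in the open interval $(\frac{4}{3},2)$.
   Context: $BS(1,k)=\langle a,t\mid tat^{-1}=a^k\rangle\cong \mathbb{Z}[1/k]\rtimes\mathbb{Z}$ via $a\mapsto(1,0)$, $t\mapsto(0,1)$, with the generator of $\mathbb{Z}$ acting by multiplication by $k$; $\mathbb{Z}[1/k]=\{(x,0)\}$ is a normal subgroup. The length of a conjugacy class is the minimal word length of its elements. The growth rate is the reciprocal of the radius of convergence of $\sum c_0(n)z^n$. *)

theory Defs
  imports "HOL-Analysis.Analysis"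
begin

text \<open>BS(1,k) realised as Z[1/k] \<rtimes> Z: pairs (x, m) with x a k-adic rational,
  (x,m)(y,n) = (x + k^m y, m + n).  a = (1,0), t = (0,1).\<close>

definition Zk :: "nat \<Rightarrow> rat set" where
  "Zk k = {q. \<exists>p::int. \<exists>j::nat. q = of_int p / of_nat k ^ j}"

definition BS :: "nat \<Rightarrow> (rat \<times> int) set" where
  "BS k = {g. fst g \<in> Zk k}"

definition bs_mult :: "nat \<Rightarrow> rat \<times> int \<Rightarrow> rat \<times> int \<Rightarrow> rat \<times> int" where
  "bs_mult k g h = (fst g + (of_nat k) powi (snd g) * fst h, snd g + snd h)"

definition bs_inv :: "nat \<Rightarrow> rat \<times> int \<Rightarrow> rat \<times> int" where
  "bs_inv k g = (- ((of_nat k) powi (- snd g)) * fst g, - snd g)"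

definition bs_one :: "rat \<times> int" where
  "bs_one = (0, 0)"

definition bs_a :: "rat \<times> int" where "bs_a = (1, 0)"
definition bs_t :: "rat \<times> int" where "bs_t = (0, 1)"

definition bs_gens :: "nat \<Rightarrow> (rat \<times> int) set" where
  "bs_gens k = {bs_a, bs_inv k bs_a, bs_t, bs_inv k bs_t}"

definition bs_eval :: "nat \<Rightarrow> (rat \<times> int) list \<Rightarrow> rat \<times> int" where
  "bs_eval k ws = foldr (bs_mult k) ws bs_one"

definition bs_wordlen :: "nat \<Rightarrow> rat \<times> int \<Rightarrow> nat" where
  "bs_wordlen k g = (LEAST n. \<exists>ws. length ws = n \<and> set ws \<subseteq> bs_gens k \<and> bs_eval k ws = g)"

definition bs_conjclass :: "nat \<Rightarrow> rat \<times> int \<Rightarrow> (rat \<times> int) set" where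
  "bs_conjclass k g = {bs_mult k (bs_mult k h g) (bs_inv k h) | h. h \<in> BS k}"

definition bs_classlen :: "nat \<Rightarrow> (rat \<times> int) set \<Rightarrow> nat" where
  "bs_classlen k C = (LEAST n. \<exists>g\<in>C. bs_wordlen k g = n)"

definition c0 :: "nat \<Rightarrow> nat \<Rightarrow> nat" where
  "c0 k n = card {C. \<exists>g \<in> BS k. C = bs_conjclass k g \<and> C \<subseteq> {g' \<in> BS k. snd g' = 0}
                      \<and> bs_classlen k C = n}"

end

theory Submission
  imports Defs "HOL-Real_Asymp.Real_Asymp"
begin

lemma kpos_powi: "(k::nat) > 0 \<Longrightarrow> (of_nat k :: rat) powi m * of_nat k powi n = of_nat k powi (m+n)"
  by (simp add: power_int_add)

lemma mult_assoc_bs: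
  assumes "k > 0"
  shows "bs_mult k (bs_mult k g h) l = bs_mult k g (bs_mult k h l)"
  using assms by (simp add: bs_mult_def algebra_simps power_int_add)

lemma mult_one_bs: "bs_mult k bs_one g = g"
  by (simp add: bs_mult_def bs_one_def)

lemma eval_append:
  assumes "k > 0"
  shows "bs_eval k (xs @ ys) = bs_mult k (bs_eval k xs) (bs_eval k ys)"
  by (induction xs) (simp_all add: bs_eval_def mult_one_bs mult_assoc_bs[OF assms])

lemma eval_Cons: "bs_eval k (g # ws) = bs_mult k g (bs_eval k ws)"
  by (simp add: bs_eval_def)

lemma eval_Nil: "bs_eval k [] = (0,0)"
  by (simp add: bs_eval_def bs_one_def)

lemma inv_a: "bs_inv k bs_a = (-1, 0)" by (simp add: bs_inv_def bs_a_def)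
lemma inv_t: "bs_inv k bs_t = (0, -1)" by (simp add: bs_inv_def bs_t_def)

lemma gens_eq: "bs_gens k = {(1,0), (-1,0), (0,1), (0,-1)}"
  unfolding bs_gens_def inv_a inv_t by (simp add: bs_a_def bs_t_def)

lemma eval_rep_a: "bs_eval k (replicate n (1,0)) = (of_nat n, 0)"
  by (induction n) (simp_all add: eval_Cons eval_Nil bs_mult_def)
lemma eval_rep_ai: "bs_eval k (replicate n (-1,0)) = (- of_nat n, 0)"
  by (induction n) (simp_all add: eval_Cons eval_Nil bs_mult_def)
lemma eval_rep_t: "bs_eval k (replicate n (0,1)) = (0, int n)"
  by (induction n) (simp_all add: eval_Cons eval_Nil bs_mult_def)
lemma eval_rep_ti: "bs_eval k (replicate n (0,-1)) = (0, - int n)"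
  by (induction n) (simp_all add: eval_Cons eval_Nil bs_mult_def)

lemma word_int_a: "\<exists>ws. set ws \<subseteq> bs_gens k \<and> bs_eval k ws = (of_int p, 0)"
proof (cases "p \<ge> 0")
  case True
  then show ?thesis by (intro exI[of _ "replicate (nat p) (1,0)"]) (auto simp: gens_eq eval_rep_a)
next
  case False
  then show ?thesis by (intro exI[of _ "replicate (nat (-p)) (-1,0)"]) (auto simp: gens_eq eval_rep_ai)
qed

lemma word_int_t: "\<exists>ws. set ws \<subseteq> bs_gens k \<and> bs_eval k ws = (0, m)"
proof (cases "m \<ge> 0")
  case True
  then show ?thesis by (intro exI[of _ "replicate (nat m) (0,1)"]) (auto simp: gens_eq eval_rep_t)
next
  case False
  then show ?thesis by (intro exI[of _ "replicate (nat (-m)) (0,-1)"]) (auto simp: gens_eq eval_rep_ti)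
qed

lemma generated:
  assumes "k > 0" "g \<in> BS k"
  shows "\<exists>ws. set ws \<subseteq> bs_gens k \<and> bs_eval k ws = g"
proof -
  obtain p j where pj: "fst g = of_int p / of_nat k ^ j" using assms(2) by (auto simp: BS_def Zk_def)
  obtain w1 where w1: "set w1 \<subseteq> bs_gens k" "bs_eval k w1 = (0, - int j)" using word_int_t by blast
  obtain w2 where w2: "set w2 \<subseteq> bs_gens k" "bs_eval k w2 = (of_int p, 0)" using word_int_a by blast
  obtain w3 where w3: "set w3 \<subseteq> bs_gens k" "bs_eval k w3 = (0, int j + snd g)" using word_int_t by blast
  have "bs_eval k (w1 @ w2 @ w3) = g"
    using assms(1) pj by (simp add: eval_append w1 w2 w3 bs_mult_def power_int_minus divide_inverse prod_eq_iff)
  then show ?thesis using w1 w2 w3 by (intro exI[of _ "w1 @ w2 @ w3"]) auto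
qed

lemma wordlen_word:
  assumes "k > 0" "g \<in> BS k"
  shows "\<exists>ws. length ws = bs_wordlen k g \<and> set ws \<subseteq> bs_gens k \<and> bs_eval k ws = g"
  unfolding bs_wordlen_def
  by (rule LeastI_ex) (use generated[OF assms] in blast)

lemma wordlen_le:
  assumes "set ws \<subseteq> bs_gens k" "bs_eval k ws = g"
  shows "bs_wordlen k g \<le> length ws"
  unfolding bs_wordlen_def by (rule Least_le) (use assms in blast)

lemma zero_Zk: "0 \<in> Zk k" by (auto simp: Zk_def intro!: exI[of _ 0])

lemma conjclass_eq:
  assumes "k > 0"
  shows "bs_conjclass k (x, 0) = {(of_nat k powi m * x, 0) | m. True}"
proof -
  have "bs_mult k (bs_mult k h (x,0)) (bs_inv k h) = (of_nat k powi (snd h) * x, 0)" for h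
    using assms by (simp add: bs_mult_def bs_inv_def algebra_simps flip: power_int_add)
  then show ?thesis unfolding bs_conjclass_def
    using zero_Zk by (auto simp: BS_def intro!: exI[of _ "(0, m)" for m])
qed


fun dval :: "nat \<Rightarrow> int list \<Rightarrow> int" where
  "dval k [] = 0"
| "dval k (d # ds) = d + int k * dval k ds"

definition absum :: "int list \<Rightarrow> int" where
  "absum ds = sum_list (map abs ds)"

lemma dval_snoc0: "dval k (ds @ [0]) = dval k ds"
  by (induction ds) auto

lemma dval_update: "i < length ds \<Longrightarrow> dval k (ds[i := ds ! i + e]) = dval k ds + e * int k ^ i"
proof (induction ds arbitrary: i)
  case Nil then show ?case by simp
next
  case (Cons d ds)
  then show ?case by (cases i) (auto simp: algebra_simps)
qed

lemma absum_simps[simp]: "absum [] = 0" "absum (d # ds) = \<bar>d\<bar> + absum ds" "absum (ds @ es) = absum ds + absum es"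
  by (simp_all add: absum_def)

lemma absum_update: "i < length ds \<Longrightarrow> absum (ds[i := ds ! i + e]) \<le> absum ds + \<bar>e\<bar>"
proof -
  assume i: "i < length ds"
  have L: "\<And>j. j < length xs \<Longrightarrow> absum (xs[j := v]) = absum xs + \<bar>v\<bar> - \<bar>xs ! j\<bar>" for xs v j
  proof (induction xs arbitrary: j)
    case Nil then show ?case by simp
  next
    case (Cons y ys) then show ?case by (cases j) (auto simp del: list_update.simps, auto)
  qed
  have "absum (ds[i := ds ! i + e]) = absum ds + \<bar>ds ! i + e\<bar> - \<bar>ds ! i\<bar>"
    using L[OF i] .
  also have "\<dots> \<le> absum ds + \<bar>e\<bar>" by simp
  finally show ?thesis .
qed


definition inv_core :: "nat \<Rightarrow> rat \<times> int \<Rightarrow> nat \<Rightarrow> int \<Rightarrow> int list \<Rightarrow> bool" where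
  "inv_core k g n lo ds \<longleftrightarrow> fst g = of_nat k powi lo * of_int (dval k ds) \<and> ds \<noteq> [] \<and> lo \<le> 0
     \<and> lo \<le> snd g \<and> 0 \<le> lo + int (length ds) - 1 \<and> snd g \<le> lo + int (length ds) - 1
     \<and> absum ds + 2 * (int (length ds) - 1) - \<bar>snd g\<bar> \<le> int n"

lemma core:
  assumes "k > 0" "set ws \<subseteq> bs_gens k"
  shows "\<exists>lo ds. inv_core k (bs_eval k ws) (length ws) lo ds"
  using assms(2)
proof (induction ws)
  case Nil
  show ?case by (auto simp: inv_core_def eval_Nil intro!: exI[of _ 0] exI[of _ "[0]"])
next
  case (Cons g ws)
  then obtain lo ds where I: "inv_core k (bs_eval k ws) (length ws) lo ds" by auto
  obtain x H where xH: "bs_eval k ws = (x, H)" by fastforce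
  have kq: "(of_nat k :: rat) \<noteq> 0" using assms(1) by simp
  have g: "g \<in> {(1,0), (-1,0), (0,1), (0,-1)}" using Cons.prems gens_eq by auto
  have E: "bs_eval k (g # ws) = bs_mult k g (x, H)" by (simp add: eval_Cons xH)
  from I have x: "x = of_nat k powi lo * of_int (dval k ds)" and ne: "ds \<noteq> []" and l0: "lo \<le> 0"
    and lH: "lo \<le> H" and h0: "0 \<le> lo + int (length ds) - 1" and hH: "H \<le> lo + int (length ds) - 1"
    and c: "absum ds + 2 * (int (length ds) - 1) - \<bar>H\<bar> \<le> int (length ws)"
    by (auto simp: inv_core_def xH)
  consider (a) "g = (1,0)" | (ai) "g = (-1,0)" | (t) "g = (0,1)" | (ti) "g = (0,-1)" using g by blast
  then show ?case
  proof cases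
    case a
    define i where "i = nat (-lo)"
    have i: "i < length ds" using l0 h0 by (simp add: i_def)
    have pw: "of_nat k powi lo * of_nat k ^ i = (1::rat)"
      using l0 kq by (simp add: i_def power_int_minus field_simps power_int_def)
    have E2: "bs_eval k (g # ws) = (1 + x, H)" using E a by (simp add: bs_mult_def)
    have dv: "dval k (ds[i := ds ! i + 1]) = dval k ds + 1 * int k ^ i" using dval_update[OF i] .
    have ab: "absum (ds[i := ds ! i + 1]) \<le> absum ds + 1" using absum_update[OF i, of "1"] by simp
    have "of_nat k powi lo * of_int (dval k (ds[i := ds ! i + 1])) = 1 + x"
      unfolding dv x using pw by (simp add: algebra_simps)
    then have "inv_core k (bs_eval k (g # ws)) (length (g # ws)) lo (ds[i := ds ! i + 1])"
      using ab ne l0 lH h0 hH c unfolding inv_core_def E2 by simp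
    then show ?thesis by blast
  next
    case ai
    define i where "i = nat (-lo)"
    have i: "i < length ds" using l0 h0 by (simp add: i_def)
    have pw: "of_nat k powi lo * of_nat k ^ i = (1::rat)"
      using l0 kq by (simp add: i_def power_int_minus field_simps power_int_def)
    have E2: "bs_eval k (g # ws) = ((-1) + x, H)" using E ai by (simp add: bs_mult_def)
    have dv: "dval k (ds[i := ds ! i + (-1)]) = dval k ds + (-1) * int k ^ i" using dval_update[OF i] .
    have ab: "absum (ds[i := ds ! i + (-1)]) \<le> absum ds + 1" using absum_update[OF i, of "(-1)"] by simp
    have "of_nat k powi lo * of_int (dval k (ds[i := ds ! i + (-1)])) = (-1) + x"
      unfolding dv x using pw by (simp add: algebra_simps)
    then have "inv_core k (bs_eval k (g # ws)) (length (g # ws)) lo (ds[i := ds ! i + (-1)])"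
      using ab ne l0 lH h0 hH c unfolding inv_core_def E2 by simp
    then show ?thesis by blast
  next
    case t
    have E2: "bs_eval k (g # ws) = (of_nat k * x, H + 1)" using E t by (simp add: bs_mult_def)
    show ?thesis
    proof (cases "lo \<le> -1")
      case True
      have "of_nat k * (of_nat k powi lo) = (of_nat k powi (lo + 1) :: rat)"
        using kq by (simp add: power_int_add)
      then have "inv_core k (bs_eval k (g # ws)) (length (g # ws)) (lo + 1) ds"
        using True x ne l0 lH h0 hH c
        unfolding inv_core_def E2 by (auto simp: algebra_simps)
      then show ?thesis by blast
    next
      case False
      then have "lo = 0" using l0 by simp
      then have "inv_core k (bs_eval k (g # ws)) (length (g # ws)) 0 (0 # ds)"
        using x ne l0 lH h0 hH c
        unfolding inv_core_def E2 by (auto simp: algebra_simps)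
      then show ?thesis by blast
    qed
  next
    case ti
    have E2: "bs_eval k (g # ws) = (inverse (of_nat k) * x, H - 1)" using E ti by (simp add: bs_mult_def power_int_minus)
    show ?thesis
    proof (cases "lo + int (length ds) - 1 \<ge> 1")
      case True
      have "inverse (of_nat k) * (of_nat k powi lo) = (of_nat k powi (lo - 1) :: rat)"
        using kq by (simp add: power_int_diff field_simps)
      then have "inv_core k (bs_eval k (g # ws)) (length (g # ws)) (lo - 1) ds"
        using True x ne l0 lH h0 hH c
        unfolding inv_core_def E2 by (auto simp: algebra_simps)
      then show ?thesis by blast
    next
      case False
      have "inverse (of_nat k) * (of_nat k powi lo) = (of_nat k powi (lo - 1) :: rat)"
        using kq by (simp add: power_int_diff field_simps)
      then have "inv_core k (bs_eval k (g # ws)) (length (g # ws)) (lo - 1) (ds @ [0])"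
        using False x ne l0 lH h0 hH c
        unfolding inv_core_def E2 by (auto simp: algebra_simps dval_snoc0)
      then show ?thesis by blast
    qed
  qed
qed


definition Pc :: "nat \<Rightarrow> int list set" where
  "Pc s = {ds. absum ds + 2 * int (length ds) \<le> int s}"

lemma absum_nonneg: "absum ds \<ge> 0"
  by (induction ds) auto

lemma absum_mem: "d \<in> set ds \<Longrightarrow> \<bar>d\<bar> \<le> absum ds"
  by (induction ds) (auto simp: absum_nonneg add_increasing add_increasing2)

lemma finite_Pc: "finite (Pc s)"
proof -
  have "Pc s \<subseteq> {xs. set xs \<subseteq> {-int s..int s} \<and> length xs \<le> s}"
  proof
    fix ds assume "ds \<in> Pc s"
    then have c: "absum ds + 2 * int (length ds) \<le> int s" by (simp add: Pc_def)
    have "set ds \<subseteq> {-int s..int s}"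
    proof
      fix d assume "d \<in> set ds"
      then have "\<bar>d\<bar> \<le> absum ds" by (rule absum_mem)
      then show "d \<in> {-int s..int s}" using c by auto
    qed
    moreover have "length ds \<le> s" using c absum_nonneg[of ds] by linarith
    ultimately show "ds \<in> {xs. set xs \<subseteq> {-int s..int s} \<and> length xs \<le> s}" by blast
  qed
  then show ?thesis by (rule finite_subset) (rule finite_lists_length_le, simp)
qed

lemma Pc_small: "s < 2 \<Longrightarrow> Pc s = {[]}"
proof -
  assume s: "s < 2"
  have "ds = []" if "ds \<in> Pc s" for ds
    using that s absum_nonneg[of ds] by (cases ds) (auto simp: Pc_def)
  then show ?thesis by (auto simp: Pc_def)
qed

lemma Pc_decomp:
  "Pc (m + 2) \<subseteq> {[]} \<union> (Cons 0 ` Pc m) \<union>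
     (\<Union>i\<in>{..<m}. Cons (int (m - i)) ` Pc i \<union> Cons (- int (m - i)) ` Pc i)"
proof
  fix ds assume ds: "ds \<in> Pc (m + 2)"
  show "ds \<in> {[]} \<union> (Cons 0 ` Pc m) \<union>
     (\<Union>i\<in>{..<m}. Cons (int (m - i)) ` Pc i \<union> Cons (- int (m - i)) ` Pc i)"
  proof (cases ds)
    case Nil then show ?thesis by simp
  next
    case (Cons d es)
    have c: "\<bar>d\<bar> + absum es + 2 * int (length es) \<le> int m" using ds Cons by (simp add: Pc_def)
    have nn: "absum es + 2 * int (length es) \<ge> 0" using absum_nonneg[of es] by simp
    show ?thesis
    proof (cases "d = 0")
      case True
      then have "es \<in> Pc m" using c by (simp add: Pc_def)
      then show ?thesis using Cons True by blast
    next
      case False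
      define i where "i = m - nat \<bar>d\<bar>"
      have im: "i < m" using False c nn by (simp add: i_def)
      have es: "es \<in> Pc i" using c nn by (simp add: Pc_def i_def)
      have "d = int (m - i) \<or> d = - int (m - i)" using c nn by (simp add: i_def) linarith
      then show ?thesis using Cons im es by blast
    qed
  qed
qed

lemma card_Pc: "real (card (Pc s)) \<le> 10 * (19/10) ^ s"
proof (induction s rule: less_induct)
  case (less s)
  show ?case
  proof (cases "s < 2")
    case True
    then show ?thesis using Pc_small[OF True] by (simp add: one_le_power order_trans[OF _ mult_left_mono[of 1 "(19/10::real)^s"]])
  next
    case False
    then obtain m where s: "s = m + 2" by (metis add.commute le_Suc_ex not_less)
    let ?b = "19/10 :: real"
    have fin: "finite (Pc i)" for i by (rule finite_Pc)
    have "card (Pc s) \<le> card ({[]} \<union> (Cons 0 ` Pc m) \<union>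
     (\<Union>i\<in>{..<m}. Cons (int (m - i)) ` Pc i \<union> Cons (- int (m - i)) ` Pc i))"
      unfolding s by (rule card_mono[OF _ Pc_decomp]) (simp add: fin)
    also have "\<dots> \<le> card ({[]} \<union> (Cons 0 ` Pc m)) + card (\<Union>i\<in>{..<m}. Cons (int (m - i)) ` Pc i \<union> Cons (- int (m - i)) ` Pc i)"
      by (rule card_Un_le)
    also have "\<dots> \<le> (1 + card (Pc m)) + (\<Sum>i<m. card (Cons (int (m - i)) ` Pc i \<union> Cons (- int (m - i)) ` Pc i))"
      by (intro add_mono card_UN_le order_trans[OF card_Un_le] add_mono card_image_le fin) auto
    also have "\<dots> \<le> (1 + card (Pc m)) + (\<Sum>i<m. card (Pc i) + card (Pc i))"
      by (intro add_mono order_refl sum_mono order_trans[OF card_Un_le] add_mono card_image_le fin)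
    finally have "real (card (Pc s)) \<le> real ((1 + card (Pc m)) + (\<Sum>i<m. card (Pc i) + card (Pc i)))"
      by (simp only: of_nat_le_iff)
    then have A: "real (card (Pc s)) \<le> 1 + real (card (Pc m)) + (\<Sum>i<m. 2 * real (card (Pc i)))"
      by (simp add: of_nat_sum)
    have "(\<Sum>i<m. 2 * real (card (Pc i))) \<le> (\<Sum>i<m. 20 * ?b ^ i)"
    proof (intro sum_mono)
      fix i assume "i \<in> {..<m}"
      then have "i < s" using s by simp
      then have "real (card (Pc i)) \<le> 10 * ?b ^ i" using less by blast
      then show "2 * real (card (Pc i)) \<le> 20 * ?b ^ i" by simp
    qed
    also have "\<dots> = 20 * ((?b ^ m - 1) / (?b - 1))"
    proof -
      have "(\<Sum>i<m. 20 * ?b ^ i) = 20 * (\<Sum>i<m. ?b ^ i)" by (simp add: sum_distrib_left)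
      also have "(\<Sum>i<m. ?b ^ i) = (1 - ?b ^ m) / (1 - ?b)" by (simp only: sum_gp_strict) simp
      also have "(1 - ?b ^ m) / (1 - ?b) = (?b ^ m - 1) / (?b - 1)"
        by (metis minus_diff_eq minus_divide_divide)
      finally show ?thesis .
    qed
    finally have B: "(\<Sum>i<m. 2 * real (card (Pc i))) \<le> 20 * ((?b ^ m - 1) / (?b - 1))" .
    have C: "real (card (Pc m)) \<le> 10 * ?b ^ m" using less.IH[of m] s by linarith
    have "real (card (Pc s)) \<le> 1 + 10 * ?b ^ m + 20 * ((?b ^ m - 1) / (?b - 1))"
      using A B C by linarith
    also have "\<dots> \<le> 10 * ?b ^ s"
    proof -
      have e1: "?b ^ s = ?b ^ m * (361/100)" unfolding s by (simp add: power_add power2_eq_square)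
      have e2: "(?b ^ m - 1) / (?b - 1) = (?b ^ m - 1) * (10/9)" by simp
      have y: "?b ^ m \<ge> 1" by (rule one_le_power) simp
      have "\<And>y::real. y \<ge> 1 \<Longrightarrow> 1 + 10 * y + 20 * ((y - 1) * (10/9)) \<le> 10 * (y * (361/100))"
        by (simp add: field_simps)
      from this[OF y] show ?thesis unfolding e1 e2 .
    qed
    finally show ?thesis .
  qed
qed


definition c0set :: "nat \<Rightarrow> nat \<Rightarrow> (rat \<times> int) set set" where
  "c0set k n = {C. \<exists>g \<in> BS k. C = bs_conjclass k g \<and> C \<subseteq> {g' \<in> BS k. snd g' = 0}
                      \<and> bs_classlen k C = n}"

lemma c0_eq: "c0 k n = card (c0set k n)" by (simp add: c0_def c0set_def)

lemma class_scale:
  assumes "k > 0"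
  shows "bs_conjclass k (of_nat k powi j * x, 0) = bs_conjclass k (x, 0)"
proof -
  have kq: "(of_nat k :: rat) \<noteq> 0" using assms by simp
  have "{(of_nat k powi m * (of_nat k powi j * x), 0) | m. True} = {(of_nat k powi m * x, 0) | m::int. True}"
  proof (intro set_eqI iffI)
    fix p assume "p \<in> {(of_nat k powi m * (of_nat k powi j * x), 0) | m. True}"
    then obtain m where "p = (of_nat k powi m * (of_nat k powi j * x), 0)" by blast
    then have "p = (of_nat k powi (m + j) * x, 0)" using kq by (simp add: power_int_add)
    then show "p \<in> {(of_nat k powi m * x, 0) | m::int. True}" by blast
  next
    fix p assume "p \<in> {(of_nat k powi m * x, 0) | m::int. True}"
    then obtain m where "p = (of_nat k powi m * x, 0)" by blast
    then have "p = (of_nat k powi (m - j) * (of_nat k powi j * x), 0)" using kq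
      by (simp add: power_int_diff)
    then show "p \<in> {(of_nat k powi m * (of_nat k powi j * x), 0) | m. True}" by blast
  qed
  then show ?thesis using conjclass_eq[OF assms] by simp
qed

lemma self_in_class: "g \<in> bs_conjclass k g"
proof -
  have "bs_mult k (bs_mult k (0,0) g) (bs_inv k (0,0)) = g"
    by (cases g) (simp add: bs_mult_def bs_inv_def)
  moreover have "(0::rat, 0::int) \<in> BS k" by (simp add: BS_def zero_Zk)
  ultimately show ?thesis unfolding bs_conjclass_def by (smt (verit) mem_Collect_eq)
qed

lemma upper_map:
  assumes k: "k > 0" and C: "C \<in> c0set k n"
  shows "\<exists>ds \<in> Pc (n + 2). C = bs_conjclass k (of_int (dval k ds), 0)"
proof -
  obtain g where g: "g \<in> BS k" "C = bs_conjclass k g" "C \<subseteq> {g' \<in> BS k. snd g' = 0}"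
    "bs_classlen k C = n" using C by (auto simp: c0set_def)
  have gC: "g \<in> C" using g(2) self_in_class by simp
  then have "snd g = 0" using g(3) by auto
  then obtain x where x: "g = (x, 0)" by (cases g) auto
  have "\<exists>g'\<in>C. bs_wordlen k g' = bs_classlen k C"
    unfolding bs_classlen_def by (rule LeastI_ex) (use gC in blast)
  then obtain g' where g': "g' \<in> C" "bs_wordlen k g' = n" using g(4) by auto
  have g'B: "g' \<in> BS k" using g' g(3) by auto
  from g'(1) obtain m where m: "g' = (of_nat k powi m * x, 0)"
    using g(2) x conjclass_eq[OF k] by auto
  have Cg': "C = bs_conjclass k g'" using g(2) x m class_scale[OF k] by simp
  obtain ws where ws: "length ws = n" "set ws \<subseteq> bs_gens k" "bs_eval k ws = g'"
    using wordlen_word[OF k g'B] g'(2) by auto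
  obtain lo ds where I: "inv_core k g' n lo ds" using core[OF k ws(2)] ws by auto
  then have e: "fst g' = of_nat k powi lo * of_int (dval k ds)"
    and c: "absum ds + 2 * (int (length ds) - 1) \<le> int n"
    using m by (auto simp: inv_core_def)
  have "g' = (of_nat k powi lo * of_int (dval k ds), 0)" using e m by (cases g') auto
  then have "C = bs_conjclass k (of_int (dval k ds), 0)" using Cg' class_scale[OF k] by simp
  moreover have "ds \<in> Pc (n + 2)" using c by (simp add: Pc_def)
  ultimately show ?thesis by blast
qed

lemma c0set_sub:
  assumes "k > 0"
  shows "c0set k n \<subseteq> (\<lambda>ds. bs_conjclass k (of_int (dval k ds), 0)) ` Pc (n + 2)"
  using upper_map[OF assms] by blast

lemma finite_c0set: "k > 0 \<Longrightarrow> finite (c0set k n)"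
  by (rule finite_subset[OF c0set_sub]) (auto simp: finite_Pc)

lemma c0_upper: "k > 0 \<Longrightarrow> real (c0 k n) \<le> 10 * (19/10) ^ (n + 2)"
proof -
  assume k: "k > 0"
  have "c0 k n \<le> card ((\<lambda>ds. bs_conjclass k (of_int (dval k ds), 0)) ` Pc (n + 2))"
    unfolding c0_eq by (rule card_mono[OF _ c0set_sub[OF k]]) (simp add: finite_Pc)
  also have "\<dots> \<le> card (Pc (n + 2))" by (rule card_image_le[OF finite_Pc])
  finally show ?thesis using card_Pc[of "n+2"] by linarith
qed


fun Wd :: "int list \<Rightarrow> (rat \<times> int) list" where
  "Wd [] = []"
| "Wd (d # ds) = replicate (nat \<bar>d\<bar>) (if d \<ge> 0 then (1,0) else (-1,0)) @ [(0,1)] @ Wd ds @ [(0,-1)]"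

lemma Wd_props:
  assumes k: "k > 0"
  shows "bs_eval k (Wd ds) = (of_int (dval k ds), 0) \<and> set (Wd ds) \<subseteq> bs_gens k
    \<and> int (length (Wd ds)) = absum ds + 2 * int (length ds)"
proof (induction ds)
  case Nil then show ?case by (simp add: eval_Nil)
  case (Cons d ds)
  have r: "bs_eval k (replicate (nat \<bar>d\<bar>) (if d \<ge> 0 then (1,0) else (-1,0))) = (of_int d, 0)"
    by (cases "d \<ge> 0") (simp_all add: eval_rep_a eval_rep_ai)
  have "bs_eval k (Wd (d # ds)) = (of_int (dval k (d # ds)), 0)"
    using Cons k by (simp add: eval_append r eval_Cons eval_Nil bs_mult_def power_int_minus)
  moreover have "set (Wd (d # ds)) \<subseteq> bs_gens k" using Cons by (auto simp: gens_eq)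
  ultimately show ?case using Cons by simp
qed

lemma int_Zk: "of_nat k powi m * of_int v \<in> Zk k"
proof (cases "m \<ge> 0")
  case True
  then have "(of_nat k powi m * of_int v :: rat) = of_int (int k ^ nat m * v) / of_nat k ^ 0"
    by (simp add: power_int_def)
  then show ?thesis unfolding Zk_def by blast
next
  case False
  then have "(of_nat k powi m * of_int v :: rat) = of_int v / of_nat k ^ nat (-m)"
    by (simp add: power_int_def field_simps power_inverse)
  then show ?thesis unfolding Zk_def by blast
qed

lemma fam_in:
  assumes k: "k > 0"
  shows "bs_conjclass k (of_int v, 0) \<in> c0set k (bs_classlen k (bs_conjclass k (of_int v, 0)))"
proof -
  have gB: "(of_int v :: rat, 0::int) \<in> BS k" using int_Zk[of k 0 v] by (simp add: BS_def)
  have "bs_conjclass k (of_int v, 0) \<subseteq> {g' \<in> BS k. snd g' = 0}"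
    using int_Zk[of k] by (auto simp: conjclass_eq[OF k] BS_def)
  then show ?thesis using gB unfolding c0set_def by blast
qed

lemma classlen_le:
  assumes "g \<in> C" "set ws \<subseteq> bs_gens k" "bs_eval k ws = g"
  shows "bs_classlen k C \<le> length ws"
proof -
  have "bs_classlen k C \<le> bs_wordlen k g"
    unfolding bs_classlen_def by (rule Least_le) (use assms in blast)
  also have "\<dots> \<le> length ws" by (rule wordlen_le[OF assms(2,3)])
  finally show ?thesis .
qed

lemma absum_small: "set ds \<subseteq> {-1,0,1} \<Longrightarrow> absum ds \<le> int (length ds)"
  by (induction ds) auto

lemma dval_inj:
  assumes "k \<ge> 3"
  shows "length ds = length es \<Longrightarrow> set ds \<subseteq> {-1,0,1} \<Longrightarrow> set es \<subseteq> {-1,0,1}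
    \<Longrightarrow> dval k ds = dval k es \<Longrightarrow> ds = es"
proof (induction ds arbitrary: es)
  case Nil then show ?case by simp
next
  case (Cons d ds)
  then obtain e es' where es: "es = e # es'" by (cases es) auto
  have eq: "d - e = int k * (dval k es' - dval k ds)" using Cons.prems es by (simp add: algebra_simps)
  have de: "\<bar>d - e\<bar> \<le> 2" using Cons.prems es by auto
  have "d = e"
  proof (rule ccontr)
    assume "d \<noteq> e"
    then have "dval k es' - dval k ds \<noteq> 0" using eq by auto
    then have "\<bar>dval k es' - dval k ds\<bar> \<ge> 1" by linarith
    then have "\<bar>int k * (dval k es' - dval k ds)\<bar> \<ge> int k * 1"
      unfolding abs_mult abs_of_nat by (intro mult_left_mono) auto
    then show False using eq de assms by simp
  qed
  moreover have "dval k ds = dval k es'" using eq \<open>d = e\<close> assms by simp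
  ultimately show ?case using Cons es by auto
qed

lemma not_dvd1: "k \<ge> 3 \<Longrightarrow> \<not> int k dvd dval k (1 # ds)"
proof
  assume "k \<ge> 3" "int k dvd dval k (1 # ds)"
  then have "int k dvd 1" by (simp add: dvd_add_left_iff)
  then show False using \<open>k \<ge> 3\<close> by simp
qed

lemma scale_int_eq:
  assumes k: "k \<ge> 3" and u: "\<not> int k dvd u" and v: "\<not> int k dvd v"
    and e: "(of_int v :: rat) = of_nat k powi m * of_int u"
  shows "v = u"
proof (cases "m \<ge> 0")
  case True
  then have "(of_int v :: rat) = of_int (int k ^ nat m * u)" using e by (simp add: power_int_def)
  then have vv: "v = int k ^ nat m * u" by (simp only: of_int_eq_iff)
  show ?thesis
  proof (cases "nat m")
    case 0 then show ?thesis using vv by simp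
  next
    case (Suc j) then show ?thesis using vv v by simp
  qed
next
  case False
  have kq: "(of_nat k :: rat) \<noteq> 0" using k by simp
  have "(of_int u :: rat) = of_nat k powi (-m) * of_int v" using e kq
    by (simp add: power_int_minus field_simps)
  then have "(of_int u :: rat) = of_int (int k ^ nat (-m) * v)" using False by (simp add: power_int_def)
  then have uu: "u = int k ^ nat (-m) * v" by (simp only: of_int_eq_iff)
  then show ?thesis using u False by (cases "nat (-m)") auto
qed

definition Fam :: "nat \<Rightarrow> int list set" where
  "Fam M = {ds. set ds \<subseteq> {-1,0,1} \<and> length ds = M}"

lemma lower_sum:
  assumes k: "k \<ge> 3"
  shows "3 ^ M \<le> (\<Sum>j\<le>3*M+3. c0 k j)"
proof -
  have k0: "k > 0" using k by simp
  define Cl where "Cl ds = bs_conjclass k (of_int (dval k (1 # ds)), 0)" for ds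
  have inj: "inj_on Cl (Fam M)"
  proof
    fix ds es assume ds: "ds \<in> Fam M" and es: "es \<in> Fam M" and eq: "Cl ds = Cl es"
    have "(of_int (dval k (1 # es)) :: rat, 0::int) \<in> Cl ds" using eq self_in_class unfolding Cl_def by metis
    then obtain m where "(of_int (dval k (1 # es)) :: rat) = of_nat k powi m * of_int (dval k (1 # ds))"
      unfolding Cl_def conjclass_eq[OF k0] by auto
    then have "dval k (1 # es) = dval k (1 # ds)" using scale_int_eq[OF k not_dvd1[OF k] not_dvd1[OF k]] by blast
    then have "dval k es = dval k ds" using k0 by simp
    then show "ds = es" using dval_inj[OF k, of es ds] ds es by (auto simp: Fam_def)
  qed
  have sub: "Cl ` Fam M \<subseteq> (\<Union>j\<in>{..3*M+3}. c0set k j)"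
  proof
    fix C assume "C \<in> Cl ` Fam M"
    then obtain ds where ds: "ds \<in> Fam M" "C = Cl ds" by auto
    have W: "bs_eval k (Wd (1 # ds)) = (of_int (dval k (1 # ds)), 0)" "set (Wd (1 # ds)) \<subseteq> bs_gens k"
      "int (length (Wd (1 # ds))) = absum (1 # ds) + 2 * int (length (1 # ds))"
      using Wd_props[OF k0] by blast+
    have "absum ds \<le> int M" using absum_small[of ds] ds(1) by (auto simp: Fam_def)
    then have len: "length (Wd (1 # ds)) \<le> 3 * M + 3" using W(3) ds(1) by (simp add: Fam_def)
    have "bs_classlen k C \<le> length (Wd (1 # ds))"
      using classlen_le[OF _ W(2,1)] self_in_class ds(2) unfolding Cl_def by blast
    then have "bs_classlen k C \<le> 3 * M + 3" using len by linarith
    moreover have "C \<in> c0set k (bs_classlen k C)" using fam_in[OF k0] ds(2) unfolding Cl_def by blast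
    ultimately show "C \<in> (\<Union>j\<in>{..3*M+3}. c0set k j)" by blast
  qed
  have "3 ^ M = card (Fam M)" unfolding Fam_def by (subst card_lists_length_eq) (auto simp: numeral_3_eq_3)
  also have "\<dots> = card (Cl ` Fam M)" using card_image[OF inj] by simp
  also have "\<dots> \<le> card (\<Union>j\<in>{..3*M+3}. c0set k j)"
    by (rule card_mono[OF _ sub]) (auto intro: finite_c0set[OF k0])
  also have "\<dots> \<le> (\<Sum>j\<le>3*M+3. card (c0set k j))" by (rule card_UN_le) simp
  finally show ?thesis by (simp add: c0_eq)
qed


lemma upper_limsup:
  assumes k: "k > 0"
  shows "limsup (\<lambda>n. ereal (root n (real (c0 k n)))) \<le> ereal (19/10)"
proof -
  let ?Y = "\<lambda>n. ereal (root n (361/10) * (19/10))"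
  have ev: "eventually (\<lambda>n. ereal (root n (real (c0 k n))) \<le> ?Y n) sequentially"
    unfolding eventually_sequentially
  proof (intro exI allI impI)
    fix n :: nat assume "n \<ge> 1"
    then have n: "n > 0" by simp
    have "real (c0 k n) \<le> 10 * (19/10) ^ (n + 2)" by (rule c0_upper[OF k])
    also have "\<dots> = 361/10 * (19/10) ^ n" by (simp add: power_add power2_eq_square)
    finally have "root n (real (c0 k n)) \<le> root n (361/10 * (19/10) ^ n)" using n by simp
    also have "\<dots> = root n (361/10) * root n ((19/10) ^ n)" by (rule real_root_mult)
    also have "root n ((19/10) ^ n) = 19/10" by (rule real_root_power_cancel[OF n]) simp
    finally show "ereal (root n (real (c0 k n))) \<le> ?Y n" by simp
  qed
  have "(\<lambda>n. root n (361/10) * (19/10)) \<longlonglongrightarrow> 1 * (19/10::real)"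
    by (intro tendsto_mult LIMSEQ_root_const tendsto_const) simp
  then have lim: "?Y \<longlonglongrightarrow> ereal (19/10)" by simp
  have "limsup (\<lambda>n. ereal (root n (real (c0 k n)))) \<le> limsup ?Y" by (rule Limsup_mono[OF ev])
  also have "limsup ?Y = ereal (19/10)" by (rule lim_imp_Limsup[OF trivial_limit_sequentially lim])
  finally show ?thesis .
qed

lemma lower_limsup:
  assumes k: "k \<ge> 3"
  shows "ereal (7/5) \<le> limsup (\<lambda>n. ereal (root n (real (c0 k n))))"
proof (rule ccontr)
  assume "\<not> ?thesis"
  then have "limsup (\<lambda>n. ereal (root n (real (c0 k n)))) < ereal (7/5)" by simp
  from Limsup_lessD[OF this] obtain N0 where N0: "\<And>n. n \<ge> N0 \<Longrightarrow> root n (real (c0 k n)) < 7/5"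
    unfolding eventually_sequentially by auto
  define K where "K = (\<Sum>i\<le>N0. real (c0 k i))"
  have bound: "real (c0 k j) \<le> K + (7/5) ^ j" for j
  proof (cases "j \<le> N0")
    case True
    have "real (c0 k j) \<le> K" unfolding K_def by (rule member_le_sum) (use True in auto)
    moreover have "(0::real) \<le> (7/5) ^ j" by simp
    ultimately show ?thesis by linarith
  next
    case False
    then have j: "j > 0" "j \<ge> N0" by auto
    have r: "root j (real (c0 k j)) < 7/5" using N0 j by simp
    have "real (c0 k j) = root j (real (c0 k j)) ^ j" using j by simp
    also have "\<dots> \<le> (7/5) ^ j" using r by (intro power_mono) (auto simp: real_root_ge_zero)
    finally show ?thesis using K_def by (smt (verit) sum_nonneg of_nat_0_le_iff)
  qed
  have sumb: "real (\<Sum>j\<le>n. c0 k j) \<le> (real n + 1) * K + 5/2 * (7/5) ^ (n + 1)" for n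
  proof -
    have "real (\<Sum>j\<le>n. c0 k j) = (\<Sum>j\<le>n. real (c0 k j))" by simp
    also have "\<dots> \<le> (\<Sum>j\<le>n. K + (7/5) ^ j)" by (rule sum_mono) (rule bound)
    also have "\<dots> = (real n + 1) * K + (\<Sum>j<Suc n. (7/5::real) ^ j)"
      by (simp add: sum.distrib lessThan_Suc_atMost)
    also have "(\<Sum>j<Suc n. (7/5::real) ^ j) = ((7/5) ^ (n+1) - 1) * (5/2)"
      by (simp only: sum_gp_strict) (simp add: field_simps)
    also have "\<dots> \<le> 5/2 * (7/5) ^ (n + 1)" by simp
    finally show ?thesis by simp
  qed
  have main: "3 ^ M \<le> (3 * real M + 4) * K + 5/2 * (7/5) ^ 4 * (343/125) ^ M" for M
  proof -
    have "real (3 ^ M :: nat) \<le> real (\<Sum>j\<le>3*M+3. c0 k j)" using lower_sum[OF k, of M] by (simp only: of_nat_le_iff)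
    also have "\<dots> \<le> (real (3*M+3) + 1) * K + 5/2 * (7/5) ^ (3*M+3 + 1)" by (rule sumb)
    also have "(7/5::real) ^ (3*M+3 + 1) = (7/5) ^ 4 * (343/125) ^ M"
    proof -
      have "(7/5::real) ^ (3*M+3 + 1) = (7/5) ^ 4 * ((7/5) ^ 3) ^ M"
        by (simp add: power_add power_mult[symmetric] mult.commute)
      also have "((7/5::real) ^ 3) = 343/125" by (simp add: power3_eq_cube)
      finally show ?thesis .
    qed
    finally show ?thesis by (simp add: algebra_simps)
  qed
  have l1: "(\<lambda>M::nat. (3 * real M + 4) / 3 ^ M) \<longlonglongrightarrow> 0" by real_asymp
  have l2: "(\<lambda>M::nat. (343/375::real) ^ M) \<longlonglongrightarrow> 0" by (rule LIMSEQ_power_zero) simp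
  have "(\<lambda>M. K * ((3 * real M + 4) / 3 ^ M) + 5/2 * (7/5) ^ 4 * (343/375::real) ^ M) \<longlonglongrightarrow> K * 0 + 5/2 * (7/5) ^ 4 * 0"
    by (intro tendsto_add tendsto_mult tendsto_const l1 l2)
  then have "eventually (\<lambda>M. K * ((3 * real M + 4) / 3 ^ M) + 5/2 * (7/5) ^ 4 * (343/375::real) ^ M < 1) sequentially"
    by (intro order_tendstoD) auto
  then obtain M where M: "K * ((3 * real M + 4) / 3 ^ M) + 5/2 * (7/5) ^ 4 * (343/375::real) ^ M < 1"
    unfolding eventually_sequentially by auto
  have "(343/375::real) ^ M = ((343/125) / 3) ^ M" by simp
  also have "\<dots> = (343/125) ^ M / 3 ^ M" by (rule power_divide)
  finally have "(343/375::real) ^ M = (343/125) ^ M / 3 ^ M" .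
  then have "K * ((3 * real M + 4) / 3 ^ M) + 5/2 * (7/5) ^ 4 * (343/375::real) ^ M
      = ((3 * real M + 4) * K + 5/2 * (7/5) ^ 4 * (343/125) ^ M) / 3 ^ M"
    by (simp add: field_simps)
  with M have "(3 * real M + 4) * K + 5/2 * (7/5) ^ 4 * (343/125) ^ M < 3 ^ M"
    by (simp add: divide_less_eq)
  with main[of M] show False by simp
qed

theorem corollary3p4:
  fixes r k :: nat
  assumes "r \<ge> 1" and "k = 2 * r + 1"
  shows "ereal (4/3) < limsup (\<lambda>n. ereal (root n (real (c0 k n))))
       \<and> limsup (\<lambda>n. ereal (root n (real (c0 k n)))) < ereal 2"
proof
  have k: "k \<ge> 3" using assms by simp
  have "ereal (4/3) < ereal (7/5)" by simp
  also have "\<dots> \<le> limsup (\<lambda>n. ereal (root n (real (c0 k n))))" by (rule lower_limsup[OF k])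
  finally show "ereal (4/3) < limsup (\<lambda>n. ereal (root n (real (c0 k n))))" .
  have "limsup (\<lambda>n. ereal (root n (real (c0 k n)))) \<le> ereal (19/10)" by (rule upper_limsup) (use k in simp)
  also have "\<dots> < ereal 2" by simp
  finally show "limsup (\<lambda>n. ereal (root n (real (c0 k n)))) < ereal 2" .
qed

end
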